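(* For a positive integer $N$ and integers $m,\ell$ with $m\equiv \ell\pmod 2$, define \[ S_{m,\ell}^{N}(q):=\frac{q^{-\frac{1}{8}+\frac{(\ell+1)^2}{4(N+2)}-\frac{m^2}{4N}}}{J_{1}^3}\, f_{1,1+N,1}\big(q^{1+\frac{1}{2}(m+\ell)},q^{1-\frac{1}{2}(m-\ell)},q\big). \] Then $S_{m,\ell}^{N}(q)=S_{-m,\ell}^{N}(q)$, $S_{m,\ell}^{N}(q)=S_{2N-m,\ell}^{N}(q)$, and $S_{m,\ell}^{N}(q)=S_{N-m,N-\ell}^{N}(q)$.
   Context: Let $q=e^{2\pi i\tau}$ with $\operatorname{Im}\tau>0$, and for real $\alpha$ put $q^{\alpha}:=e^{2\pi i\alpha\tau}$. $J_1:=\prod_{i\ge1}(1-q^i)$. For positive integers $a,b,c$ and $x,y\in\mathbb{C}^*$, the Hecke-type double-sum is $f_{a,b,c}(x,y,q):=\Big(\sum_{r,s\ge0}-\sum_{r,s<0}\Big)(-1)^{r+s}x^ry^sq^{a\binom{r}{2}+brs+c\binom{s}{2}}$. *)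

theory Defs
  imports "HOL-Analysis.Analysis"
begin

definition qpow :: "complex \<Rightarrow> real \<Rightarrow> complex" where
  "qpow \<tau> \<alpha> = exp (2 * of_real pi * \<i> * of_real \<alpha> * \<tau>)"

definition J1 :: "complex \<Rightarrow> complex" where
  "J1 \<tau> = (\<Prod>i. 1 - (qpow \<tau> 1) ^ Suc i)"

definition hecke_term :: "int \<Rightarrow> int \<Rightarrow> int \<Rightarrow> complex \<Rightarrow> complex \<Rightarrow> complex \<Rightarrow> int \<times> int \<Rightarrow> complex" where
  "hecke_term a b c x y q = (\<lambda>(r, s). (-1) powi (r + s) * x powi r * y powi s *
      q powi (a * (r * (r - 1) div 2) + b * r * s + c * (s * (s - 1) div 2)))"

definition hecke_f :: "int \<Rightarrow> int \<Rightarrow> int \<Rightarrow> complex \<Rightarrow> complex \<Rightarrow> complex \<Rightarrow> complex" where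
  "hecke_f a b c x y q =
     infsum (hecke_term a b c x y q) {(r, s). r \<ge> 0 \<and> s \<ge> 0}
   - infsum (hecke_term a b c x y q) {(r, s). r < 0 \<and> s < 0}"

definition S_fun :: "nat \<Rightarrow> int \<Rightarrow> int \<Rightarrow> complex \<Rightarrow> complex" where
  "S_fun N m l \<tau> =
     qpow \<tau> (- 1/8 + (of_int l + 1)^2 / (4 * (of_nat N + 2)) - (of_int m)^2 / (4 * of_nat N))
     / (J1 \<tau>) ^ 3
     * hecke_f 1 (1 + int N) 1
         (qpow \<tau> (1 + (of_int m + of_int l) / 2))
         (qpow \<tau> (1 - (of_int m - of_int l) / 2))
         (qpow \<tau> 1)"

end

theory Submission
  imports Defs
begin

lemma geo_int_summable:
  fixes \<rho> :: real assumes "0 \<le> \<rho>" "\<rho> < 1"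
  shows "(\<lambda>r::int. \<rho> ^ nat \<bar>r\<bar>) summable_on UNIV"
proof -
  have s1: "(\<lambda>n::nat. \<rho> ^ n) summable_on UNIV"
    by (rule norm_summable_imp_summable_on) (use assms in \<open>simp add: summable_geometric\<close>)
  have s2: "(\<lambda>n::nat. \<rho> * \<rho> ^ n) summable_on UNIV"
    using s1 by (rule summable_on_cmult_right)
  have b1: "bij_betw int UNIV {r::int. 0 \<le> r}"
    by (rule bij_betw_byWitness[where f'=nat]) auto
  have b2: "bij_betw (\<lambda>n::nat. - int n - 1) UNIV {r::int. r < 0}"
    by (rule bij_betw_byWitness[where f'="\<lambda>r. nat (-r-1)"]) auto
  have p1: "(\<lambda>r::int. \<rho> ^ nat \<bar>r\<bar>) summable_on {r. 0 \<le> r}"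
    using summable_on_reindex_bij_betw[OF b1, of "\<lambda>r::int. \<rho> ^ nat \<bar>r\<bar>"] s1 by simp
  have e: "\<rho> ^ nat \<bar>- int n - 1\<bar> = \<rho> * \<rho> ^ n" for n :: nat
  proof -
    have "nat \<bar>- int n - 1\<bar> = Suc n" by simp
    then show ?thesis by simp
  qed
  have p2: "(\<lambda>r::int. \<rho> ^ nat \<bar>r\<bar>) summable_on {r. r < 0}"
    using summable_on_reindex_bij_betw[OF b2, of "\<lambda>r::int. \<rho> ^ nat \<bar>r\<bar>"] s2 e by simp
  have "(\<lambda>r::int. \<rho> ^ nat \<bar>r\<bar>) summable_on ({r. 0 \<le> r} \<union> {r. r < 0})"
    by (rule summable_on_Un_disjoint[OF p1 p2]) auto
  moreover have "{r::int. 0 \<le> r} \<union> {r. r < 0} = UNIV" by auto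
  ultimately show ?thesis by simp
qed

lemma geo_prod_summable:
  fixes \<rho> :: real assumes "0 \<le> \<rho>" "\<rho> < 1"
  shows "(\<lambda>p::int\<times>int. \<rho> ^ nat \<bar>fst p\<bar> * \<rho> ^ nat \<bar>snd p\<bar>) summable_on UNIV"
proof -
  let ?a = "\<lambda>r::int. \<rho> ^ nat \<bar>r\<bar>"
  have sa: "?a summable_on UNIV" by (rule geo_int_summable[OF assms])
  have "(\<lambda>p::int\<times>int. ?a (fst p) * ?a (snd p)) summable_on Sigma UNIV (\<lambda>_. UNIV)"
  proof (rule summable_on_SigmaI[where g="\<lambda>r. ?a r * infsum ?a UNIV"])
    fix r :: int
    show "((\<lambda>s. ?a (fst (r, s)) * ?a (snd (r, s))) has_sum ?a r * infsum ?a UNIV) UNIV"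
      using has_sum_cmult_right[OF has_sum_infsum[OF sa], of "?a r"] by simp
  next
    show "(\<lambda>r. ?a r * infsum ?a UNIV) summable_on UNIV"
      using sa by (rule summable_on_cmult_left)
  next
    fix r s :: int show "0 \<le> ?a (fst (r,s)) * ?a (snd (r,s))" using assms by simp
  qed
  then show ?thesis by simp
qed

lemma summable_by_bound:
  fixes f :: "int\<times>int \<Rightarrow> complex" and \<rho> K :: real
  assumes "0 \<le> \<rho>" "\<rho> < 1"
    and "\<And>p. p \<in> S \<Longrightarrow> norm (f p) \<le> K * (\<rho> ^ nat \<bar>fst p\<bar> * \<rho> ^ nat \<bar>snd p\<bar>)"
  shows "f summable_on S"
proof -
  have "(\<lambda>p::int\<times>int. K * (\<rho> ^ nat \<bar>fst p\<bar> * \<rho> ^ nat \<bar>snd p\<bar>)) summable_on UNIV"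
    by (rule summable_on_cmult_right[OF geo_prod_summable[OF assms(1,2)]])
  then have "(\<lambda>p::int\<times>int. K * (\<rho> ^ nat \<bar>fst p\<bar> * \<rho> ^ nat \<bar>snd p\<bar>)) summable_on S"
    by (rule summable_on_subset_banach) auto
  then have "(\<lambda>p. norm (f p)) summable_on S"
    by (rule summable_on_comparison_test) (use assms in auto)
  then show ?thesis using summable_on_iff_abs_summable_on_complex by blast
qed

lemma int_uu1: "(u::int) * (u - 1) \<ge> 0"
  by (cases "u \<le> 0") (auto intro: mult_nonpos_nonpos mult_nonneg_nonneg)

lemma two_div2: "2 * ((r::int) * (r - 1) div 2) = r * (r - 1)"
proof -
  have "even (r * (r - 1))" by auto
  then show ?thesis by simp
qed

definition Eh :: "int \<Rightarrow> int \<Rightarrow> int \<Rightarrow> int \<Rightarrow> int \<Rightarrow> int" where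
  "Eh N A B r s = (1 + A) * r + (1 + B) * s + r * (r - 1) div 2 + (1 + N) * r * s + s * (s - 1) div 2"

lemma Eh_bound:
  assumes N: "N \<ge> 0" and W: "(r \<ge> 0 \<and> s \<ge> 0) \<or> (r < 0 \<and> s < 0) \<or> r = 0"
  shows "Eh N A B r s \<ge> \<bar>r\<bar> + \<bar>s\<bar> - (A^2 + B^2 + (A+2)^2 + (B+2)^2)"
proof -
  have hr: "2 * (r * (r - 1) div 2) = r * (r - 1)" by (rule two_div2)
  have hs: "2 * (s * (s - 1) div 2) = s * (s - 1)" by (rule two_div2)
  have rs0: "r * s \<ge> 0" using W by (auto intro: mult_nonpos_nonpos)
  have rs: "(1 + N) * (r * s) \<ge> 0" using rs0 N by simp
  have p1: "(r + A) * (r + A - 1) \<ge> 0" by (rule int_uu1)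
  have p2: "(s + B) * (s + B - 1) \<ge> 0" by (rule int_uu1)
  have p3: "(r + A + 2) * (r + A + 1) \<ge> 0" using int_uu1[of "r+A+2"] by (simp add: algebra_simps)
  have p4: "(s + B + 2) * (s + B + 1) \<ge> 0" using int_uu1[of "s+B+2"] by (simp add: algebra_simps)
  have sq: "A^2 = A*A" "B^2 = B*B" "(A+2)^2 = (A+2)*(A+2)" "(B+2)^2 = (B+2)*(B+2)"
    by (simp_all add: power2_eq_square)
  have q: "A*A \<ge> 0" "B*B \<ge> 0" "(A+2)*(A+2) \<ge> 0" "(B+2)*(B+2) \<ge> 0" by simp_all
  have q2: "A*A + A \<ge> 0" "B*B + B \<ge> 0" "(A+2)*(A+2) + (A+2) \<ge> 0" "(B+2)*(B+2) + (B+2) \<ge> 0"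
    using int_uu1[of "-A"] int_uu1[of "-B"] int_uu1[of "-A-2"] int_uu1[of "-B-2"]
    by (simp_all add: algebra_simps)
  have main: "2 * Eh N A B r s = 2*(1 + A) * r + 2*(1 + B) * s + r * (r - 1) + 2*((1 + N) * (r * s)) + s * (s - 1)"
    unfolding Eh_def using hr hs by (simp add: algebra_simps)
  have i1: "2 * Eh N A B r s = 2* r + 2* s + (r + A) * (r + A - 1) + (s + B) * (s + B - 1) - A*A + A - B*B + B + 2*((1 + N) * (r * s))"
    using main by (simp add: algebra_simps)
  have i2: "2 * Eh N A B r s = -2* r - 2* s + (r + A + 2) * (r + A + 1) + (s + B + 2) * (s + B + 1) - (A+2)*(A+2) + (A+2) - (B+2)*(B+2) + (B+2) + 2*((1 + N) * (r * s))"
    using main by (simp add: algebra_simps)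
  have i3: "2 * Eh N A B 0 s = -2* s + (s + B + 2) * (s + B + 1) - (B+2)*(B+2) + (B+2)"
    using main unfolding Eh_def using hs by (simp add: algebra_simps)
  consider "r \<ge> 0" "s \<ge> 0" | "r < 0" "s < 0" | "r = 0" "s < 0" using W by linarith
  then show ?thesis
  proof cases
    case 1
    then show ?thesis unfolding sq using i1 p1 p2 rs q q2 by linarith
  next
    case 2
    then show ?thesis unfolding sq using i2 p3 p4 rs q q2 by linarith
  next
    case 3
    have e0: "Eh N A B r s = Eh N A B 0 s" "\<bar>r\<bar> = 0" using 3 by simp_all
    show ?thesis unfolding sq e0 using 3 i3 p4 q q2 by linarith
  qed
qed


lemma Eh2: "2 * Eh N A B r s = 2*(1 + A) * r + 2*(1 + B) * s + r * (r - 1) + 2*((1 + N) * (r * s)) + s * (s - 1)"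
  unfolding Eh_def using two_div2[of r] two_div2[of s] by (simp add: algebra_simps)

lemma Eh_shift: "Eh N A B (r + 1) s = (1 + A) + Eh N (A + 1) (B + 1 + N) r s"
proof -
  have "2 * Eh N A B (r + 1) s = 2 * ((1 + A) + Eh N (A + 1) (B + 1 + N) r s)"
    by (simp only: Eh2 distrib_left) (simp add: algebra_simps)
  then show ?thesis by simp
qed

lemma Eh_inv: "Eh N A B (-1 - r) (-1 - s) = (1 + N - A - B) + Eh N (1 + N - A) (1 + N - B) r s"
proof -
  have "2 * Eh N A B (-1 - r) (-1 - s) = 2 * ((1 + N - A - B) + Eh N (1 + N - A) (1 + N - B) r s)"
    by (simp only: Eh2 distrib_left) (simp add: algebra_simps)
  then show ?thesis by simp
qed

lemma Eh_swap: "Eh N A B s r = Eh N B A r s"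
  unfolding Eh_def by (simp add: algebra_simps)

lemma Eh_refl: "Eh N A B 0 (-(2*B+1) - s) = Eh N A B 0 s"
proof -
  have "2 * Eh N A B 0 (-(2*B+1) - s) = 2 * Eh N A B 0 s"
    by (simp only: Eh2) (simp add: algebra_simps)
  then show ?thesis by simp
qed

definition Gt :: "complex \<Rightarrow> int \<Rightarrow> int \<Rightarrow> int \<Rightarrow> int \<times> int \<Rightarrow> complex" where
  "Gt z N A B p = (-1) powi (fst p + snd p) * z powi (Eh N A B (fst p) (snd p))"

definition Ff :: "complex \<Rightarrow> int \<Rightarrow> int \<Rightarrow> int \<Rightarrow> complex" where
  "Ff z N A B = infsum (Gt z N A B) {(r, s). r \<ge> 0 \<and> s \<ge> 0} - infsum (Gt z N A B) {(r, s). r < 0 \<and> s < 0}"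

lemma Gt_shift:
  assumes "z \<noteq> 0"
  shows "Gt z N A B (r + 1, s) = - (z powi (A + 1)) * Gt z N (A + 1) (B + 1 + N) (r, s)"
proof -
  have "(-1::complex) powi (r + 1 + s) = - ((-1) powi (r + s))"
    by (simp add: power_int_minus_left)
  moreover have "z powi (Eh N A B (r + 1) s) = z powi (A + 1) * z powi (Eh N (A + 1) (B + 1 + N) r s)"
    unfolding Eh_shift using assms by (simp add: power_int_add add.commute)
  ultimately show ?thesis unfolding Gt_def by simp
qed

lemma Gt_inv:
  assumes "z \<noteq> 0"
  shows "Gt z N A B (-1 - r, -1 - s) = z powi (1 + N - A - B) * Gt z N (1 + N - A) (1 + N - B) (r, s)"
proof -
  have "(-1::complex) powi (-1 - r + (-1 - s)) = (-1) powi (r + s)"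
    by (simp add: power_int_minus_left)
  moreover have "z powi (Eh N A B (-1 - r) (-1 - s)) = z powi (1 + N - A - B) * z powi (Eh N (1 + N - A) (1 + N - B) r s)"
    unfolding Eh_inv using assms by (simp add: power_int_add)
  ultimately show ?thesis unfolding Gt_def by simp
qed

lemma Gt_swap: "Gt z N A B (s, r) = Gt z N B A (r, s)"
  unfolding Gt_def by (simp add: Eh_swap add.commute)

lemma Gt_refl: "Gt z N A B (0, -(2*B+1) - s) = - Gt z N A B (0, s)"
proof -
  have "(-1::complex) powi (-(2*B+1) - s) = - ((-1) powi s)"
    by (simp add: power_int_minus_left)
  moreover have "Eh N A B 0 (-(2*B+1) - s) = Eh N A B 0 s" by (rule Eh_refl)
  ultimately show ?thesis unfolding Gt_def by (simp del: minus_add_distrib)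
qed


lemma Gt_summable:
  assumes z: "z \<noteq> 0" "norm z < 1" and N: "N \<ge> 0"
    and S: "S \<subseteq> {(r, s). (r \<ge> 0 \<and> s \<ge> 0) \<or> (r < 0 \<and> s < 0) \<or> r = 0}"
  shows "Gt z N A B summable_on S"
proof (rule summable_by_bound[where \<rho>="norm z" and K="norm z powi (-(A^2+B^2+(A+2)^2+(B+2)^2))"])
  show "0 \<le> norm z" "norm z < 1" using z by auto
  fix p assume p: "p \<in> S"
  obtain r s where rs: "p = (r, s)" by (cases p)
  let ?C = "A^2+B^2+(A+2)^2+(B+2)^2"
  let ?\<rho> = "norm z"
  have W: "(r \<ge> 0 \<and> s \<ge> 0) \<or> (r < 0 \<and> s < 0) \<or> r = 0" using p S rs by auto
  have bd: "\<bar>r\<bar> + \<bar>s\<bar> - ?C \<le> Eh N A B r s" by (rule Eh_bound[OF N W])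
  have rho: "?\<rho> \<noteq> 0" "0 \<le> ?\<rho>" "?\<rho> \<le> 1" using z by auto
  have "norm (Gt z N A B p) = ?\<rho> powi Eh N A B r s"
    unfolding Gt_def rs by (simp add: norm_mult norm_power_int)
  also have "\<dots> \<le> ?\<rho> powi (\<bar>r\<bar> + \<bar>s\<bar> - ?C)"
    by (rule power_int_decreasing[OF bd]) (use rho in auto)
  also have "\<dots> = ?\<rho> powi (-?C + (\<bar>r\<bar> + \<bar>s\<bar>))"
    by (rule arg_cong[where f="power_int _"]) simp
  also have "\<dots> = ?\<rho> powi (-?C) * ?\<rho> powi (\<bar>r\<bar> + \<bar>s\<bar>)"
    by (rule power_int_add) (use rho in simp)
  also have "?\<rho> powi (\<bar>r\<bar> + \<bar>s\<bar>) = ?\<rho> powi \<bar>r\<bar> * ?\<rho> powi \<bar>s\<bar>"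
    by (rule power_int_add) (use rho in simp)
  also have "?\<rho> powi (-?C) * (?\<rho> powi \<bar>r\<bar> * ?\<rho> powi \<bar>s\<bar>) = ?\<rho> powi (-?C) * (?\<rho> ^ nat \<bar>fst p\<bar> * ?\<rho> ^ nat \<bar>snd p\<bar>)"
    by (simp add: rs power_int_nonneg_exp)
  finally show "norm (Gt z N A B p) \<le> ?\<rho> powi (-?C) * (?\<rho> ^ nat \<bar>fst p\<bar> * ?\<rho> ^ nat \<bar>snd p\<bar>)" .
qed

lemma theta_zero: "infsum (Gt z N A B) {(r, s). r = 0} = 0"
proof -
  let ?L = "{(r::int, s::int). r = 0}"
  let ?\<sigma> = "\<lambda>p::int\<times>int. (fst p, -(2*B+1) - snd p)"
  have bij: "bij_betw ?\<sigma> ?L ?L"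
    by (rule bij_betw_byWitness[where f'="?\<sigma>"]) auto
  have "infsum (Gt z N A B) ?L = infsum (\<lambda>p. Gt z N A B (?\<sigma> p)) ?L"
    by (rule infsum_reindex_bij_betw[OF bij, symmetric])
  also have "\<dots> = infsum (\<lambda>p. - Gt z N A B p) ?L"
  proof (rule infsum_cong)
    fix p assume "p \<in> ?L"
    then obtain t where "p = (0, t)" by auto
    then show "Gt z N A B (?\<sigma> p) = - Gt z N A B p" using Gt_refl[of z N A B t] by simp
  qed
  also have "\<dots> = - infsum (Gt z N A B) ?L" by (rule infsum_uminus)
  finally show ?thesis by simp
qed

lemma Ff_swap: "Ff z N A B = Ff z N B A"
proof -
  let ?sw = "\<lambda>p::int\<times>int. (snd p, fst p)"
  have b1: "bij_betw ?sw {(r::int, s::int). r \<ge> 0 \<and> s \<ge> 0} {(r, s). r \<ge> 0 \<and> s \<ge> 0}"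
    by (rule bij_betw_byWitness[where f'="?sw"]) auto
  have b2: "bij_betw ?sw {(r::int, s::int). r < 0 \<and> s < 0} {(r, s). r < 0 \<and> s < 0}"
    by (rule bij_betw_byWitness[where f'="?sw"]) auto
  have e: "Gt z N A B (?sw p) = Gt z N B A p" for p
    by (cases p) (simp add: Gt_swap)
  show ?thesis unfolding Ff_def
    using infsum_reindex_bij_betw[OF b1, of "Gt z N A B"] infsum_reindex_bij_betw[OF b2, of "Gt z N A B"]
    by (simp add: e)
qed

lemma Ff_inv:
  assumes "z \<noteq> 0"
  shows "Ff z N A B = - (z powi (1 + N - A - B)) * Ff z N (1 + N - A) (1 + N - B)"
proof -
  let ?iv = "\<lambda>p::int\<times>int. (-1 - fst p, -1 - snd p)"
  let ?P = "{(r::int, s::int). r \<ge> 0 \<and> s \<ge> 0}"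
  let ?M = "{(r::int, s::int). r < 0 \<and> s < 0}"
  let ?c = "z powi (1 + N - A - B)"
  let ?G = "Gt z N (1 + N - A) (1 + N - B)"
  have b1: "bij_betw ?iv ?P ?M"
    by (rule bij_betw_byWitness[where f'="?iv"]) auto
  have b2: "bij_betw ?iv ?M ?P"
    by (rule bij_betw_byWitness[where f'="?iv"]) auto
  have e: "Gt z N A B (?iv p) = ?c * ?G p" for p
    by (cases p) (simp add: Gt_inv[OF assms])
  have 1: "infsum (Gt z N A B) ?M = ?c * infsum ?G ?P"
    using infsum_reindex_bij_betw[OF b1, of "Gt z N A B"] by (simp add: e infsum_cmult_right' infsum_uminus)
  have 2: "infsum (Gt z N A B) ?P = ?c * infsum ?G ?M"
    using infsum_reindex_bij_betw[OF b2, of "Gt z N A B"] by (simp add: e infsum_cmult_right' infsum_uminus)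
  show ?thesis unfolding Ff_def 1 2 by (simp add: algebra_simps)
qed


lemma Ff_shift:
  assumes z: "z \<noteq> 0" "norm z < 1" and N: "N \<ge> 0"
  shows "Ff z N A B = - (z powi (A + 1)) * Ff z N (A + 1) (B + 1 + N)"
proof -
  let ?sh = "\<lambda>p::int\<times>int. (fst p + 1, snd p)"
  let ?P = "{(r::int, s::int). r \<ge> 0 \<and> s \<ge> 0}"
  let ?M = "{(r::int, s::int). r < 0 \<and> s < 0}"
  let ?R1 = "{(r::int, s::int). r \<ge> 1 \<and> s \<ge> 0}"
  let ?R2 = "{(r::int, s::int). r < 1 \<and> s < 0}"
  let ?Lp = "{(r::int, s::int). r = 0 \<and> s \<ge> 0}"
  let ?Lm = "{(r::int, s::int). r = 0 \<and> s < 0}"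
  let ?c = "z powi (A + 1)"
  let ?G = "Gt z N A B"
  let ?G' = "Gt z N (A + 1) (B + 1 + N)"
  have b1: "bij_betw ?sh ?P ?R1"
    by (rule bij_betw_byWitness[where f'="\<lambda>p. (fst p - 1, snd p)"]) auto
  have b2: "bij_betw ?sh ?M ?R2"
    by (rule bij_betw_byWitness[where f'="\<lambda>p. (fst p - 1, snd p)"]) auto
  have e: "?G (?sh p) = - ?c * ?G' p" for p
    by (cases p) (simp add: Gt_shift[OF z(1)])
  have 1: "infsum ?G ?R1 = - ?c * infsum ?G' ?P"
    using infsum_reindex_bij_betw[OF b1, of ?G] by (simp add: e infsum_cmult_right' infsum_uminus)
  have 2: "infsum ?G ?R2 = - ?c * infsum ?G' ?M"
    using infsum_reindex_bij_betw[OF b2, of ?G] by (simp add: e infsum_cmult_right' infsum_uminus)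
  have sm: "?G summable_on S" if "S \<subseteq> {(r, s). (r \<ge> 0 \<and> s \<ge> 0) \<or> (r < 0 \<and> s < 0) \<or> r = 0}" for S
    by (rule Gt_summable[OF z N that])
  have u1: "infsum ?G ?P = infsum ?G ?R1 + infsum ?G ?Lp"
  proof -
    have "?P = ?R1 \<union> ?Lp" by auto
    moreover have "infsum ?G (?R1 \<union> ?Lp) = infsum ?G ?R1 + infsum ?G ?Lp"
      by (rule infsum_Un_disjoint) (auto intro!: sm)
    ultimately show ?thesis by simp
  qed
  have u2: "infsum ?G ?R2 = infsum ?G ?M + infsum ?G ?Lm"
  proof -
    have "?R2 = ?M \<union> ?Lm" by auto
    moreover have "infsum ?G (?M \<union> ?Lm) = infsum ?G ?M + infsum ?G ?Lm"
      by (rule infsum_Un_disjoint) (auto intro!: sm)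
    ultimately show ?thesis by simp
  qed
  have u3: "infsum ?G ?Lp + infsum ?G ?Lm = 0"
  proof -
    have "{(r::int, s::int). r = 0} = ?Lp \<union> ?Lm" by auto
    moreover have "infsum ?G (?Lp \<union> ?Lm) = infsum ?G ?Lp + infsum ?G ?Lm"
      by (rule infsum_Un_disjoint) (auto intro!: sm)
    ultimately show ?thesis using theta_zero[of z N A B] by simp
  qed
  have "Ff z N A B = infsum ?G ?R1 - infsum ?G ?R2"
    unfolding Ff_def using u1 u2 u3 by (simp add: algebra_simps)
  also have "\<dots> = - ?c * Ff z N (A + 1) (B + 1 + N)"
    unfolding 1 2 Ff_def by (simp add: algebra_simps)
  finally show ?thesis .
qed


lemma hecke_link:
  assumes z: "z \<noteq> 0"
  shows "hecke_f 1 (1 + N) 1 (z powi (1 + A)) (z powi (1 + B)) z = Ff z N A B"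
proof -
  have e: "hecke_term 1 (1 + N) 1 (z powi (1 + A)) (z powi (1 + B)) z p = Gt z N A B p" for p
  proof -
    obtain r s where p: "p = (r, s)" by (cases p)
    have "(z powi (1 + A)) powi r * (z powi (1 + B)) powi s *
          z powi (1 * (r * (r - 1) div 2) + (1 + N) * r * s + 1 * (s * (s - 1) div 2))
        = z powi ((1 + A) * r) * z powi ((1 + B) * s) *
          z powi (r * (r - 1) div 2 + (1 + N) * r * s + s * (s - 1) div 2)"
      by (simp add: power_int_mult)
    also have "\<dots> = z powi (Eh N A B r s)"
      unfolding Eh_def using z by (simp add: power_int_add add.assoc)
    finally show ?thesis unfolding hecke_term_def Gt_def p by (simp add: mult.assoc)
  qed
  show ?thesis unfolding hecke_f_def Ff_def
    by (simp add: e[abs_def])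
qed

lemma qpow_int: "qpow \<tau> (of_int k) = (qpow \<tau> 1) powi k"
  unfolding qpow_def exp_power_int by (simp add: mult_ac)

lemma qpow_add: "qpow \<tau> (a + b) = qpow \<tau> a * qpow \<tau> b"
  unfolding qpow_def by (simp add: distrib_left distrib_right exp_add)

lemma qpow_add_int: "qpow \<tau> (a + of_int k) = qpow \<tau> a * (qpow \<tau> 1) powi k"
  by (simp add: qpow_add qpow_int[symmetric])

lemma qpow1_ne0: "qpow \<tau> 1 \<noteq> 0" unfolding qpow_def by simp

lemma qpow1_norm: assumes "Im \<tau> > 0" shows "norm (qpow \<tau> 1) < 1"
proof -
  have "norm (qpow \<tau> 1) = exp (Re (2 * of_real pi * \<i> * \<tau>))"
    unfolding qpow_def by (simp add: norm_exp_eq_Re)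
  also have "Re (2 * of_real pi * \<i> * \<tau>) = - 2 * pi * Im \<tau>" by simp
  also have "exp (- 2 * pi * Im \<tau>) < 1" using assms pi_gt_zero by simp
  finally show ?thesis .
qed

definition pref :: "nat \<Rightarrow> int \<Rightarrow> int \<Rightarrow> real" where
  "pref N m l = - 1/8 + (of_int l + 1)^2 / (4 * (of_nat N + 2)) - (of_int m)^2 / (4 * of_nat N)"

lemma S_eq:
  assumes "m mod 2 = l mod 2"
  shows "S_fun N m l \<tau> = qpow \<tau> (pref N m l) / (J1 \<tau>)^3 * Ff (qpow \<tau> 1) (int N) ((m + l) div 2) ((l - m) div 2)"
proof -
  have ev1: "even (m + l)" and ev2: "even (l - m)" using assms
    by presburger+
  have r1: "1 + (of_int m + of_int l) / 2 = (of_int (1 + (m + l) div 2) :: real)"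
  proof -
    have "m + l = 2 * ((m + l) div 2)" using ev1 by simp
    then have "(of_int m + of_int l :: real) = 2 * of_int ((m + l) div 2)"
      by (metis of_int_add of_int_mult of_int_numeral)
    then show ?thesis by simp
  qed
  have r2: "1 - (of_int m - of_int l) / 2 = (of_int (1 + (l - m) div 2) :: real)"
  proof -
    have "l - m = 2 * ((l - m) div 2)" using ev2 by simp
    then have "(of_int l - of_int m :: real) = 2 * of_int ((l - m) div 2)"
      by (metis of_int_diff of_int_mult of_int_numeral)
    then show ?thesis by (simp add: field_simps)
  qed
  show ?thesis unfolding S_fun_def pref_def r1 r2 qpow_int
    using hecke_link[OF qpow1_ne0[of \<tau>], where N="int N" and A="(m + l) div 2" and B="(l - m) div 2"] by simp
qed


lemma powi_cancel:
  fixes z :: complex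
  assumes "z \<noteq> 0" "z powi a * X = z powi b * Y"
  shows "X = z powi (b - a) * Y"
proof -
  have "z powi a \<noteq> 0" using assms(1) by simp
  then show ?thesis using assms by (simp add: power_int_diff field_simps)
qed

theorem mainTheorem5:
  fixes N :: nat and m l :: int and \<tau> :: complex
  assumes "N > 0" and "Im \<tau> > 0" and "m mod 2 = l mod 2"
  shows "S_fun N m l \<tau> = S_fun N (- m) l \<tau>
       \<and> S_fun N m l \<tau> = S_fun N (2 * int N - m) l \<tau>
       \<and> S_fun N m l \<tau> = S_fun N (int N - m) (int N - l) \<tau>"
proof -
  let ?z = "qpow \<tau> 1"
  have z0: "?z \<noteq> 0" by (rule qpow1_ne0)
  have z1: "norm ?z < 1" by (rule qpow1_norm[OF assms(2)])
  have N0: "int N \<ge> 0" by simp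
  define A where "A = (m + l) div 2"
  define B where "B = (l - m) div 2"
  have mAB: "m = A - B" and lAB: "l = A + B" unfolding A_def B_def using assms(3) by presburger+
  have S0: "S_fun N m l \<tau> = qpow \<tau> (pref N m l) / (J1 \<tau>)^3 * Ff ?z (int N) A B"
    unfolding A_def B_def by (rule S_eq[OF assms(3)])
  have S1: "S_fun N (- m) l \<tau> = qpow \<tau> (pref N m l) / (J1 \<tau>)^3 * Ff ?z (int N) B A"
  proof -
    have p: "(- m) mod 2 = l mod 2" using assms(3) by presburger
    have d: "(- m + l) div 2 = B" "(l - - m) div 2 = A" unfolding A_def B_def by (simp_all add: add.commute)
    have pr: "pref N (- m) l = pref N m l" unfolding pref_def by simp
    show ?thesis using S_eq[OF p, of N \<tau>] unfolding d pr .
  qed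
  have S2: "S_fun N (2 * int N - m) l \<tau> = qpow \<tau> (pref N m l) * ?z powi (m - int N) / (J1 \<tau>)^3 * Ff ?z (int N) (B + int N) (A - int N)"
  proof -
    have p: "(2 * int N - m) mod 2 = l mod 2" using assms(3) by presburger
    have d: "(2 * int N - m + l) div 2 = B + int N" "(l - (2 * int N - m)) div 2 = A - int N"
      unfolding A_def B_def using mAB lAB by presburger+
    have Nn: "real N \<noteq> 0" using assms(1) by simp
    have sq: "(of_int (2 * int N - m) :: real)^2 / (4 * of_nat N) = (of_int m)^2 / (4 * real N) + real N - of_int m"
      using Nn by (simp add: field_simps power2_eq_square)
    have pr: "pref N (2 * int N - m) l = pref N m l + of_int (m - int N)"
      unfolding pref_def sq by simp
    show ?thesis using S_eq[OF p, of N \<tau>] unfolding d pr qpow_add_int .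
  qed
  have F2: "Ff ?z (int N) A B = ?z powi (m - int N) * Ff ?z (int N) (B + int N) (A - int N)"
  proof -
    let ?X = "Ff ?z (int N) (A + 1) (B + 1 + int N)"
    have a: "Ff ?z (int N) A B = - (?z powi (A + 1)) * ?X" by (rule Ff_shift[OF z0 z1 N0])
    have b: "Ff ?z (int N) (B + int N) (A - int N) = - (?z powi (B + 1 + int N)) * ?X"
    proof -
      have "Ff ?z (int N) (B + int N) (A - int N) = - (?z powi (B + int N + 1)) * Ff ?z (int N) (B + int N + 1) (A - int N + 1 + int N)"
        by (rule Ff_shift[OF z0 z1 N0])
      also have "Ff ?z (int N) (B + int N + 1) (A - int N + 1 + int N) = Ff ?z (int N) (A - int N + 1 + int N) (B + int N + 1)"
        by (rule Ff_swap)
      also have "A - int N + 1 + int N = A + 1" by simp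
      also have "B + int N + 1 = B + 1 + int N" by simp
      finally show ?thesis .
    qed
    have "?z powi (B + 1 + int N) * Ff ?z (int N) A B = ?z powi (A + 1) * Ff ?z (int N) (B + int N) (A - int N)"
      unfolding a b by (simp add: mult_ac)
    from powi_cancel[OF z0 this] have "Ff ?z (int N) A B = ?z powi (A + 1 - (B + 1 + int N)) * Ff ?z (int N) (B + int N) (A - int N)" .
    moreover have "A + 1 - (B + 1 + int N) = m - int N" using mAB by simp
    ultimately show ?thesis by simp
  qed
  have S3: "S_fun N (int N - m) (int N - l) \<tau> = qpow \<tau> (pref N m l) * ?z powi (- B) / (J1 \<tau>)^3 * Ff ?z (int N) (int N - A) (- B)"
  proof -
    have p: "(int N - m) mod 2 = (int N - l) mod 2" using assms(3) by presburger
    have d: "(int N - m + (int N - l)) div 2 = int N - A" "(int N - l - (int N - m)) div 2 = - B"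
      unfolding A_def B_def using mAB lAB by presburger+
    have pr: "pref N (int N - m) (int N - l) = pref N m l + of_int (- B)"
    proof -
      have ob: "(of_int B :: real) = (of_int l - of_int m) / 2" using mAB lAB by simp
      have Nn: "real N \<noteq> 0" using assms(1) by simp
      have N2: "real N + 2 \<noteq> 0" by linarith
      have s1: "(of_int (int N - l) + 1 :: real)^2 / (4 * (of_nat N + 2)) = (of_int l + 1)^2 / (4 * (real N + 2)) + (real N - 2 * of_int l) / 4"
        using N2 by (simp add: field_simps power2_eq_square)
      have s2: "(of_int (int N - m) :: real)^2 / (4 * of_nat N) = (of_int m)^2 / (4 * real N) + (real N - 2 * of_int m) / 4"
        using Nn by (simp add: field_simps power2_eq_square)
      show ?thesis unfolding pref_def s1 s2 of_int_minus ob by (simp add: field_simps)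
    qed
    show ?thesis using S_eq[OF p, of N \<tau>] unfolding d pr qpow_add_int .
  qed
  have F3: "Ff ?z (int N) A B = ?z powi (- B) * Ff ?z (int N) (int N - A) (- B)"
  proof -
    let ?X = "Ff ?z (int N) (A + 1) (B + 1 + int N)"
    have a: "Ff ?z (int N) A B = - (?z powi (A + 1)) * ?X" by (rule Ff_shift[OF z0 z1 N0])
    have b: "Ff ?z (int N) (int N - A) (- B) = - (?z powi (1 + A + B)) * ?X"
    proof -
      have "Ff ?z (int N) (int N - A) (- B) = - (?z powi (1 + int N - (int N - A) - - B)) * Ff ?z (int N) (1 + int N - (int N - A)) (1 + int N - - B)"
        by (rule Ff_inv[OF z0])
      also have "1 + int N - (int N - A) - - B = 1 + A + B" by simp
      also have "1 + int N - (int N - A) = A + 1" by simp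
      also have "1 + int N - - B = B + 1 + int N" by simp
      finally show ?thesis .
    qed
    have "?z powi (1 + A + B) * Ff ?z (int N) A B = ?z powi (A + 1) * Ff ?z (int N) (int N - A) (- B)"
      unfolding a b by (simp add: mult_ac)
    from powi_cancel[OF z0 this] show ?thesis by simp
  qed
  show ?thesis
    unfolding S0 S1 S2 S3 using F2 F3 Ff_swap[of ?z "int N" A B] by (simp add: mult_ac)
qed

end
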